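(* Let $\gamma:[0,1]\to[0,1]^2$ be a continuous curve such that $\gamma(0)=(0,0)$, $\gamma(1)=(1,1)$, and $\gamma(t)\in\Delta$ for all $t\in(0,1)$. Then for each $n\in\mathbb{N}$ there exist distinct points $A_1,\ldots,A_{n+1}$ on $\gamma$ such that, setting $A_0=(0,0)$, $A_{n+2}=(1,1)$ and $A_{-1}=A_{n+1}-(1,1)$, $$\pi_2(\overrightarrow{A_iA_{i+1}})=\pi_1(\overrightarrow{A_{i-1}A_i}),\qquad i=0,\ldots,n+1.$$
   Context: $\pi_1(a,b)=a$ and $\pi_2(a,b)=b$ are the coordinate projections; $\overrightarrow{AB}=B-A$. $\Delta=\{(a,b)\in(0,1)^2: a>b\}$. *)

theory Defs
  imports "HOL-Analysis.Analysis"
begin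

definition Delta :: "(real \<times> real) set" where
  "Delta = {(a, b). 0 < a \<and> a < 1 \<and> 0 < b \<and> b < 1 \<and> a > b}"

end

theory Submission imports Defs begin
lemma PM:
  fixes m :: nat and F :: "nat \<Rightarrow> (nat \<Rightarrow> real) \<Rightarrow> real"
  assumes cont: "\<And>i. i < m \<Longrightarrow> continuous_map (product_topology (\<lambda>_. euclideanreal) {..<m}) euclideanreal (F i)"
  and unif: "\<And>e. e > 0 \<Longrightarrow> \<exists>\<delta>>0. \<forall>u v. (\<forall>j<m. u j \<in> {0..1} \<and> v j \<in> {0..1} \<and> \<bar>u j - v j\<bar> < \<delta>) \<longrightarrow> (\<forall>i<m. \<bar>F i u - F i v\<bar> < e)"
  and low: "\<And>i u. i < m \<Longrightarrow> \<forall>j<m. u j \<in> {0..1} \<Longrightarrow> u i = 0 \<Longrightarrow> F i u \<le> 0"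
  and up: "\<And>i u. i < m \<Longrightarrow> \<forall>j<m. u j \<in> {0..1} \<Longrightarrow> u i = 1 \<Longrightarrow> F i u \<ge> 0"
  shows "\<exists>u. (\<forall>j<m. u j \<in> {0..1}) \<and> (\<forall>i<m. F i u = 0)"
proof (rule ccontr)
  assume nz: "\<not> ?thesis"
  have agree: "F i u = F i v" if "i < m" "\<forall>j<m. u j = v j" "\<forall>j<m. u j \<in> {0..1}" for i u v
  proof (rule ccontr)
    assume "F i u \<noteq> F i v"
    define e where "e = \<bar>F i u - F i v\<bar>"
    have "e > 0" using \<open>F i u \<noteq> F i v\<close> by (simp add: e_def)
    from unif[OF this] obtain \<delta> where "\<delta> > 0" and
      d: "\<forall>u v. (\<forall>j<m. u j \<in> {0..1} \<and> v j \<in> {0..1} \<and> \<bar>u j - v j\<bar> < \<delta>) \<longrightarrow> (\<forall>i<m. \<bar>F i u - F i v\<bar> < e)"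
      by blast
    have "\<bar>F i u - F i v\<bar> < e"
      using d[rule_format, of u v i] that \<open>\<delta> > 0\<close> by auto
    then show False by (simp add: e_def)
  qed
  define K where "K = PiE {..<m} (\<lambda>_. {0..1::real})"
  define \<Phi> where "\<Phi> u = (\<Sum>i<m. \<bar>F i u\<bar>)" for u
  have "compactin (product_topology (\<lambda>_. euclideanreal) {..<m}) K"
    unfolding K_def by (simp add: compactin_PiE)
  moreover have "continuous_map (product_topology (\<lambda>_. euclideanreal) {..<m}) euclideanreal \<Phi>"
    unfolding \<Phi>_def by (intro continuous_map_sum continuous_map_real_abs cont) auto
  ultimately have cK: "compact (\<Phi> ` K)" using image_compactin by (metis compactin_euclidean_iff)
  have "restrict (\<lambda>_. 0) {..<m} \<in> K" unfolding K_def by (simp add: restrict_PiE_iff)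
  then have "\<Phi> ` K \<noteq> {}" by blast
  from compact_attains_inf[OF cK this] obtain z where z1: "z \<in> \<Phi> ` K" and z2: "\<forall>y\<in>\<Phi> ` K. z \<le> y" by blast
  from z1 obtain u0 where u0: "u0 \<in> K" and zu: "z = \<Phi> u0" by blast
  have min: "\<Phi> u0 \<le> \<Phi> u" if uK: "u \<in> K" for u
  proof -
    have "\<Phi> u \<in> \<Phi> ` K" using uK by (rule imageI)
    then have "z \<le> \<Phi> u" using z2 by (rule bspec[rotated])
    then show ?thesis using zu by simp
  qed
  define d where "d = \<Phi> u0"
  have u0c: "\<forall>j<m. u0 j \<in> {0..1}" using u0 unfolding K_def by (simp add: PiE_iff)
  have "d \<ge> 0" unfolding d_def \<Phi>_def by (simp add: sum_nonneg)
  moreover have "d \<noteq> 0"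
  proof
    assume "d = 0"
    then have "\<forall>i<m. \<bar>F i u0\<bar> = 0" unfolding d_def \<Phi>_def
      by (subst (asm) sum_nonneg_eq_0_iff) auto
    then show False using nz u0c by auto
  qed
  ultimately have dpos: "d > 0" by simp
  have m0: "m > 0"
  proof (rule ccontr)
    assume "\<not> m > 0" then show False using nz by auto
  qed
  have "d / real m > 0" using dpos m0 by simp
  from unif[OF this] obtain \<delta> where dl: "\<delta> > 0" and
    U: "\<And>u v i. (\<forall>j<m. u j \<in> {0..1} \<and> v j \<in> {0..1} \<and> \<bar>u j - v j\<bar> < \<delta>) \<Longrightarrow> i < m \<Longrightarrow> \<bar>F i u - F i v\<bar> < d / real m"
    by blast
  obtain p :: nat where p0: "p \<noteq> 0" and pd: "inverse (real p) < \<delta>"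
    using real_arch_inverse dl by blast
  define pt where "pt x = (\<lambda>j. real (x j) / real p)" for x :: "nat \<Rightarrow> nat"
  define label where "label x i = (if x i = 0 then 0 else if x i = p then 1 else if F i (pt x) \<le> 0 then 0 else (1::nat))" for x i
  have grid: "\<forall>j<m. pt x j \<in> {0..1}" if "\<forall>j<m. x j \<le> p" for x
    using that p0 by (auto simp: pt_def divide_le_eq_1)
  have lab0: "F i (pt x) \<le> 0" if "\<forall>j<m. x j \<le> p" "i < m" "label x i = 0" for x i
  proof -
    have "x i = 0 \<or> (x i \<noteq> p \<and> F i (pt x) \<le> 0)"
      using that(3) unfolding label_def by (auto split: if_splits)
    then show ?thesis
    proof
      assume "x i = 0"
      then show ?thesis using low[OF that(2) grid[OF that(1)]] by (simp add: pt_def)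
    qed auto
  qed
  have lab1: "F i (pt x) \<ge> 0" if "\<forall>j<m. x j \<le> p" "i < m" "label x i \<noteq> 0" for x i
  proof -
    have "x i = p \<or> F i (pt x) > 0"
      using that(3) unfolding label_def by (auto split: if_splits)
    then show ?thesis
    proof
      assume "x i = p"
      then show ?thesis using up[OF that(2) grid[OF that(1)]] p0 by (simp add: pt_def)
    qed auto
  qed
  obtain q where q1: "\<forall>i<m. q i < p" and
    q2: "\<forall>i<m. \<exists>r s. (\<forall>j<m. q j \<le> r j \<and> r j \<le> q j + 1) \<and> (\<forall>j<m. q j \<le> s j \<and> s j \<le> q j + 1) \<and> label r i \<noteq> label s i"
  proof (rule kuhn_lemma[of p m label])
    show "0 < p" using p0 by simp
    show "\<forall>x. (\<forall>i<m. x i \<le> p) \<longrightarrow> (\<forall>i<m. label x i = 0 \<or> label x i = 1)"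
      by (auto simp: label_def)
    show "\<forall>x. (\<forall>i<m. x i \<le> p) \<longrightarrow> (\<forall>i<m. x i = 0 \<longrightarrow> label x i = 0)"
      by (auto simp: label_def)
    show "\<forall>x. (\<forall>i<m. x i \<le> p) \<longrightarrow> (\<forall>i<m. x i = p \<longrightarrow> label x i = 1)"
      using p0 by (auto simp: label_def)
  qed auto
  have near: "\<bar>F i (pt r) - F i (pt q)\<bar> < d / real m" if "\<forall>j<m. q j \<le> r j \<and> r j \<le> q j + 1" "i < m" for r i
  proof (rule U[OF _ that(2)])
    have rg: "\<forall>j<m. r j \<le> p" using that(1) q1 by (metis Suc_eq_plus1 Suc_leI order_trans)
    have qg: "\<forall>j<m. q j \<le> p" using q1 by (simp add: less_imp_le)
    have "\<bar>pt r j - pt q j\<bar> < \<delta>" if "j < m" for j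
    proof -
      have "\<bar>pt r j - pt q j\<bar> = (real (r j) - real (q j)) / real p"
        using \<open>\<forall>j<m. q j \<le> r j \<and> r j \<le> q j + 1\<close> that p0
        by (simp add: pt_def diff_divide_distrib[symmetric])
      also have "\<dots> \<le> 1 / real p"
        using \<open>\<forall>j<m. q j \<le> r j \<and> r j \<le> q j + 1\<close> that p0
        by (intro divide_right_mono) auto
      finally show ?thesis using pd by (simp add: divide_inverse)
    qed
    then show "\<forall>j<m. pt r j \<in> {0..1} \<and> pt q j \<in> {0..1} \<and> \<bar>pt r j - pt q j\<bar> < \<delta>"
      using grid[OF rg] grid[OF qg] by auto
  qed
  have small: "\<bar>F i (pt q)\<bar> < d / real m" if im: "i < m" for i
  proof -
    obtain r s where r: "\<forall>j<m. q j \<le> r j \<and> r j \<le> q j + 1" and s: "\<forall>j<m. q j \<le> s j \<and> s j \<le> q j + 1"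
      and ne: "label r i \<noteq> label s i"
      using q2 im by blast
    have rg: "\<forall>j<m. r j \<le> p" using r q1 by (metis Suc_eq_plus1 Suc_leI order_trans)
    have sg: "\<forall>j<m. s j \<le> p" using s q1 by (metis Suc_eq_plus1 Suc_leI order_trans)
    have l01: "label x i = 0 \<or> label x i = 1" for x by (simp add: label_def)
    have "(F i (pt r) \<le> 0 \<and> F i (pt s) \<ge> 0) \<or> (F i (pt r) \<ge> 0 \<and> F i (pt s) \<le> 0)"
    proof (cases "label r i = 0")
      case True
      then have "label s i \<noteq> 0" using ne by simp
      then show ?thesis using lab0[OF rg im True] lab1[OF sg im] by simp
    next
      case False
      then have "label s i = 0" using ne l01[of r] l01[of s] by auto
      then show ?thesis using lab1[OF rg im False] lab0[OF sg im] by simp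
    qed
    then show ?thesis using near[OF r im] near[OF s im] by linarith
  qed
  have qg: "\<forall>j<m. q j \<le> p" using q1 by (simp add: less_imp_le)
  define w where "w = restrict (pt q) {..<m}"
  have wK: "w \<in> K" using grid[OF qg] unfolding w_def K_def by auto
  have "\<Phi> w = \<Phi> (pt q)" unfolding \<Phi>_def
    by (intro sum.cong refl arg_cong[where f=abs] agree) (use grid[OF qg] in \<open>auto simp: w_def\<close>)
  also have "\<dots> < (\<Sum>i<m. d / real m)" unfolding \<Phi>_def
    by (rule sum_strict_mono) (use small m0 in auto)
  also have "\<dots> = d" using m0 by simp
  finally have "\<Phi> w < d" .
  then show False using min[OF wK] unfolding d_def by simp
qed

lemma cmap_comp:
  assumes "continuous_on UNIV f" "k \<in> I"
  shows "continuous_map (product_topology (\<lambda>_. euclideanreal) I) euclideanreal (\<lambda>u. f (u k))"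
proof -
  have "continuous_map euclideanreal euclideanreal f"
    using assms(1) continuous_map_iff_continuous[of UNIV f] by simp
  from continuous_map_compose[OF continuous_map_product_projection[OF assms(2)] this]
  show ?thesis by (simp add: o_def)
qed

lemma aux3: "\<bar>y1 - y2\<bar> < e/3 \<Longrightarrow> \<bar>x1 - x2\<bar> < e/3 \<Longrightarrow> \<bar>c1 - c2\<bar> < e/3 \<Longrightarrow>
  \<bar>(y1 - min 1 (x1 + c1)) - (y2 - min 1 (x2 + c2))\<bar> < e" for y1 y2 x1 x2 c1 c2 e :: real
  by (auto simp: min_def abs_if split: if_splits)

lemma min1_lip: "\<bar>min 1 a - min 1 b\<bar> \<le> \<bar>a - b\<bar>" for a b :: real
  by (auto simp: min_def abs_if)

theorem proposition3:
  fixes \<gamma> :: "real \<Rightarrow> real \<times> real" and n :: nat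
  assumes "continuous_on {0..1} \<gamma>"
    and "\<gamma> ` {0..1} \<subseteq> {0..1} \<times> {0..1}"
    and "\<gamma> 0 = (0, 0)" and "\<gamma> 1 = (1, 1)"
    and "\<forall>t\<in>{0<..<1}. \<gamma> t \<in> Delta"
  shows "\<exists>A :: int \<Rightarrow> real \<times> real.
           (\<forall>i\<in>{1..int n + 1}. A i \<in> \<gamma> ` {0..1})
         \<and> inj_on A {1..int n + 1}
         \<and> A 0 = (0, 0) \<and> A (int n + 2) = (1, 1)
         \<and> A (-1) = A (int n + 1) - (1, 1)
         \<and> (\<forall>i\<in>{0..int n + 1}. snd (A (i + 1) - A i) = fst (A i - A (i - 1)))"
proof -
  define cl where "cl s = max 0 (min 1 s)" for s :: real
  define g where "g s = \<gamma> (cl s)" for s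
  define X where "X s = fst (g s)" for s
  define Y where "Y s = snd (g s)" for s
  have clin: "cl s \<in> {0..1}" for s unfolding cl_def by auto
  have clid: "s \<in> {0..1} \<Longrightarrow> cl s = s" for s unfolding cl_def by auto
  have cllip: "\<bar>cl a - cl b\<bar> \<le> \<bar>a - b\<bar>" for a b unfolding cl_def by (auto simp: min_def max_def abs_if)
  have B: "0 \<le> Y s \<and> Y s \<le> X s \<and> X s \<le> 1 \<and> (Y s = 0 \<longrightarrow> X s = 0) \<and> (Y s = 1 \<longrightarrow> X s = 1)" for s
  proof -
    consider "cl s = 0" | "cl s = 1" | "cl s \<in> {0<..<1}" using clin[of s] by force
    then show ?thesis
    proof cases
      case 1 then show ?thesis using assms(3) by (simp add: X_def Y_def g_def)
    next
      case 2 then show ?thesis using assms(4) by (simp add: X_def Y_def g_def)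
    next
      case 3
      then have "\<gamma> (cl s) \<in> Delta" using assms(5) by blast
      then show ?thesis unfolding Delta_def X_def Y_def g_def by auto
    qed
  qed
  have Y0: "Y 0 = 0" and Y1: "Y 1 = 1" using assms(3,4) by (simp_all add: Y_def g_def cl_def)
  have gcont: "continuous_on UNIV g"
  proof -
    have "continuous_on UNIV cl" unfolding cl_def by (intro continuous_intros)
    then show ?thesis unfolding g_def
      by (rule continuous_on_compose2[OF assms(1)]) (use clin in auto)
  qed
  have Xc: "continuous_on UNIV X" unfolding X_def by (intro continuous_intros gcont)
  have Yc: "continuous_on UNIV Y" unfolding Y_def by (intro continuous_intros gcont)
  have XYunif: "\<exists>\<delta>>0. \<forall>a b. \<bar>a - b\<bar> < \<delta> \<longrightarrow> \<bar>X a - X b\<bar> < e \<and> \<bar>Y a - Y b\<bar> < e" if "e > 0" for e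
  proof -
    have "uniformly_continuous_on {0..1} \<gamma>"
      by (rule compact_uniformly_continuous[OF assms(1) compact_Icc])
    then obtain \<delta> where dp: "\<delta> > 0" and d: "\<And>x x'. x \<in> {0..1} \<Longrightarrow> x' \<in> {0..1} \<Longrightarrow> dist x' x < \<delta> \<Longrightarrow> dist (\<gamma> x') (\<gamma> x) < e"
      unfolding uniformly_continuous_on_def using \<open>e > 0\<close> by metis
    show ?thesis
    proof (intro exI conjI allI impI)
      fix a b :: real assume ab: "\<bar>a - b\<bar> < \<delta>"
      have "dist (cl a) (cl b) < \<delta>" using cllip[of a b] ab by (simp add: dist_real_def)
      then have dd: "dist (g a) (g b) < e" unfolding g_def using d clin by blast
      show "\<bar>X a - X b\<bar> < e" using dist_fst_le[of "g a" "g b"] dd by (simp add: X_def dist_real_def)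
      show "\<bar>Y a - Y b\<bar> < e" using dist_snd_le[of "g a" "g b"] dd by (simp add: Y_def dist_real_def)
    qed (rule dp)
  qed
  define F where "F i u = (if i = 0 then X (u n) + Y (u 0) - 1 else Y (u i) - min 1 (X (u (i - 1)) + Y (u 0)))" for i and u :: "nat \<Rightarrow> real"
  have "\<exists>u. (\<forall>j<Suc n. u j \<in> {0..1}) \<and> (\<forall>i<Suc n. F i u = 0)"
  proof (rule PM)
    fix i assume i: "i < Suc n"
    show "continuous_map (product_topology (\<lambda>_. euclideanreal) {..<Suc n}) euclideanreal (F i)"
    proof (cases "i = 0")
      case True
      then show ?thesis unfolding F_def
        by (simp, intro continuous_map_diff continuous_map_add cmap_comp Xc Yc continuous_map_const[THEN iffD2]) auto
    next
      case False
      then show ?thesis unfolding F_def using i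
        by (simp, intro continuous_map_diff continuous_map_add continuous_map_real_min cmap_comp Xc Yc continuous_map_const[THEN iffD2]) auto
    qed
  next
    fix e :: real assume e: "e > 0"
    then obtain \<delta> where dp: "\<delta> > 0" and d: "\<And>a b. \<bar>a - b\<bar> < \<delta> \<Longrightarrow> \<bar>X a - X b\<bar> < e/3 \<and> \<bar>Y a - Y b\<bar> < e/3"
      using XYunif[of "e/3"] by auto
    show "\<exists>\<delta>>0. \<forall>u v. (\<forall>j<Suc n. u j \<in> {0..1} \<and> v j \<in> {0..1} \<and> \<bar>u j - v j\<bar> < \<delta>) \<longrightarrow> (\<forall>i<Suc n. \<bar>F i u - F i v\<bar> < e)"
    proof (intro exI conjI allI impI)
      fix u v i assume uv: "\<forall>j<Suc n. u j \<in> {0..1} \<and> v j \<in> {0..1} \<and> \<bar>u j - v j\<bar> < \<delta>" and i: "i < Suc n"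
      have D: "\<bar>X (u j) - X (v j)\<bar> < e/3 \<and> \<bar>Y (u j) - Y (v j)\<bar> < e/3" if "j < Suc n" for j
        using d uv that by blast
      show "\<bar>F i u - F i v\<bar> < e"
      proof (cases "i = 0")
        case True
        then show ?thesis using D[of n] D[of 0] unfolding F_def by (simp add: abs_less_iff; linarith)
      next
        case False
        have "\<bar>(Y (u i) - min 1 (X (u (i - 1)) + Y (u 0))) - (Y (v i) - min 1 (X (v (i - 1)) + Y (v 0)))\<bar> < e"
          by (rule aux3) (use D[of i] D[of 0] D[of "i - 1"] i in auto)
        then show ?thesis using False unfolding F_def by simp
      qed
    qed (rule dp)
  next
    fix i :: nat and u :: "nat \<Rightarrow> real" assume i: "i < Suc n" and u: "\<forall>j<Suc n. u j \<in> {0..1}" and ui: "u i = 0"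
    show "F i u \<le> 0"
      using B[of "u n"] B[of "u (i - 1)"] B[of "u 0"] Y0 ui unfolding F_def by auto
  next
    fix i :: nat and u :: "nat \<Rightarrow> real" assume i: "i < Suc n" and u: "\<forall>j<Suc n. u j \<in> {0..1}" and ui: "u i = 1"
    show "F i u \<ge> 0"
      using B[of "u n"] B[of "u (i - 1)"] B[of "u 0"] Y1 ui unfolding F_def by auto
  qed
  then obtain u where u01: "\<forall>j<Suc n. u j \<in> {0..1}" and Fz: "\<forall>i<Suc n. F i u = 0" by blast
  define c where "c = Y (u 0)"
  have E0: "X (u n) + c = 1" using Fz[rule_format, of 0] unfolding F_def c_def by simp
  have Ei: "Y (u i) = min 1 (X (u (i - 1)) + c)" if "1 \<le> i" "i \<le> n" for i
    using Fz[rule_format, of i] that unfolding F_def c_def by simp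
  have c0: "c \<ge> 0" using B[of "u 0"] by (simp add: c_def)
  have cpos: "c > 0"
  proof (rule ccontr)
    assume "\<not> c > 0" then have c: "c = 0" using c0 by simp
    have "i \<le> n \<Longrightarrow> X (u i) = 0" for i
    proof (induction i)
      case 0 then show ?case using B[of "u 0"] c by (simp add: c_def)
    next
      case (Suc i)
      then have "Y (u (Suc i)) = 0" using Ei[of "Suc i"] c by simp
      then show ?case using B[of "u (Suc i)"] by simp
    qed
    then show False using E0 c by simp
  qed
  have noclamp: "X (u (i - 1)) + c < 1" if "1 \<le> i" "i \<le> n" for i
  proof (rule ccontr)
    assume a: "\<not> X (u (i - 1)) + c < 1"
    have "i + k \<le> n \<Longrightarrow> X (u (i + k)) = 1" for k
    proof (induction k)
      case 0 then have "Y (u i) = 1" using Ei[of i] that a by simp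
      then show ?case using B[of "u i"] by simp
    next
      case (Suc k)
      then have "X (u (i + k)) = 1" by simp
      then have "Y (u (i + Suc k)) = 1" using Ei[of "i + Suc k"] Suc.prems that cpos by simp
      then show ?case using B[of "u (i + Suc k)"] by simp
    qed
    from this[of "n - i"] that have "X (u n) = 1" by simp
    then show False using E0 cpos by simp
  qed
  have Eq: "Y (u i) = X (u (i - 1)) + c" if "1 \<le> i" "i \<le> n" for i
    using Ei[OF that] noclamp[OF that] by simp
  have step: "X (u i) < X (u (Suc i))" if "Suc i \<le> n" for i
    using Eq[of "Suc i"] that B[of "u (Suc i)"] cpos by simp
  have mono: "X (u i) < X (u (i + Suc k))" if "i + Suc k \<le> n" for i k
    using that
  proof (induction k)
    case 0 then show ?case using step[of i] by simp
  next
    case (Suc k)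
    then show ?case using step[of "i + Suc k"] by simp
  qed
  have Xinj: "i = j" if "i \<le> n" "j \<le> n" "X (u i) = X (u j)" for i j
  proof (rule ccontr)
    assume "i \<noteq> j"
    then consider "i < j" | "j < i" by linarith
    then show False
    proof cases
      case 1 then have "j = i + Suc (j - i - 1)" by simp
      then show False using mono[of i "j - i - 1"] that by simp
    next
      case 2 then have "i = j + Suc (i - j - 1)" by simp
      then show False using mono[of j "i - j - 1"] that by simp
    qed
  qed
  have gu: "\<gamma> (u j) = g (u j)" if "j \<le> n" for j
    using u01 that clid by (simp add: g_def)
  define A where "A k = (if k = 0 then (0,0) else if k = int n + 2 then (1,1) else if k = -1 then \<gamma> (u n) - (1,1) else \<gamma> (u (nat (k - 1))))" for k :: int
  have Aj: "A (int j + 1) = \<gamma> (u j)" if "j \<le> n" for j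
    using that unfolding A_def by auto
  have AXY: "fst (A (int j + 1)) = X (u j) \<and> snd (A (int j + 1)) = Y (u j)" if "j \<le> n" for j
    using Aj[OF that] gu[OF that] by (simp add: X_def Y_def)
  have int_cases: "\<exists>j. j \<le> n \<and> k = int j + 1" if "k \<in> {1..int n + 1}" for k
    using that by (intro exI[of _ "nat (k - 1)"]) auto
  have D: "snd (A (k + 1)) - fst (A k) = c" if kk: "k \<in> {-1..int n + 1}" for k
  proof -
    have "k = -1 \<or> k = 0 \<or> k = int n + 1 \<or> k \<in> {1..int n}" using kk by (simp only: atLeastAtMost_iff) presburger
    then consider "k = -1" | "k = 0" | "k = int n + 1" | "k \<in> {1..int n}" by blast
    then show ?thesis
    proof cases
      case 1 then show ?thesis using E0 gu[of n] by (simp add: A_def X_def)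
    next
      case 2 then show ?thesis using AXY[of 0] by (simp add: A_def c_def)
    next
      case 3 then show ?thesis using AXY[of n] E0 by (simp add: A_def)
    next
      case 4
      define j where "j = nat k"
      have j: "1 \<le> j" "j \<le> n" "k = int j" using 4 unfolding j_def by auto
      have e1: "A (k + 1) = A (int j + 1)" using j by simp
      have e2: "A k = A (int (j - 1) + 1)" using j by (simp add: of_nat_diff)
      have jn: "j - 1 \<le> n" using j by simp
      show ?thesis unfolding e1 e2 using AXY[OF j(2)] AXY[OF jn] Eq[OF j(1,2)] by simp
    qed
  qed
  show ?thesis
  proof (intro exI[of _ A] conjI ballI)
    fix i assume "i \<in> {1..int n + 1}"
    then obtain j where j: "j \<le> n" "i = int j + 1" using int_cases by blast
    have uj: "u j \<in> {0..1}" using u01 j(1) by simp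
    have "A i = \<gamma> (u j)" using Aj[OF j(1)] j(2) by simp
    then show "A i \<in> \<gamma> ` {0..1}" using uj by (rule image_eqI)
  next
    show "inj_on A {1..int n + 1}"
    proof (rule inj_onI)
      fix a b assume a: "a \<in> {1..int n + 1}" and b: "b \<in> {1..int n + 1}" and ab: "A a = A b"
      obtain i where i: "i \<le> n" "a = int i + 1" using int_cases a by blast
      obtain j where j: "j \<le> n" "b = int j + 1" using int_cases b by blast
      have "fst (A (int i + 1)) = fst (A (int j + 1))" using ab i j by simp
      then have "X (u i) = X (u j)" using AXY[OF i(1)] AXY[OF j(1)] by simp
      then have "i = j" by (rule Xinj[OF i(1) j(1)])
      then show "a = b" using i(2) j(2) by simp
    qed
  next
    show "A 0 = (0, 0)" by (simp add: A_def)
    show "A (int n + 2) = (1, 1)" by (simp add: A_def)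
    show "A (- 1) = A (int n + 1) - (1, 1)" using Aj[of n] by (simp add: A_def)
  next
    fix i assume i: "i \<in> {0..int n + 1}"
    have h1: "snd (A (i + 1)) - fst (A i) = c" using D i by simp
    have h2: "snd (A (i - 1 + 1)) - fst (A (i - 1)) = c" using D[of "i - 1"] i by simp
    have h3: "i - 1 + 1 = i" by simp
    have h4: "snd (A i) - fst (A (i - 1)) = c" using h2 unfolding h3 .
    show "snd (A (i + 1) - A i) = fst (A i - A (i - 1))"
      unfolding fst_diff snd_diff using h1 h4 by linarith
  qed
qed

end
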